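(* Let $\Lambda$ be a row-finite source-free $k$-graph and fix a $\Lambda$-semibranching function system on a $\sigma$-finite measure space $(X, \mu)$. Suppose that a vertex $v$ of $\Lambda$ satisfies $R_{\tau}=R_{v\tau} =D_v$ for all $\tau \in v\Lambda$. If there is a measurable subset $X_v$ of $D_v$ with $0 < \mu(X_v) < \mu(D_v)$, then no $\Lambda$-projective representation arising from this $\Lambda$-semibranching function system is monic.
   Context: A $k$-graph is a countable small category $\Lambda$ with a functor $d:\Lambda\to\mathbb{N}^k$ with unique factorization; vertices $\Lambda^0$, range/source $r,s$, $v\Lambda$ the paths with range $v$; row-finite/source-free: paths of fixed degree and range form a finite/nonempty set. $C^*(\Lambda)$ is the universal $C^*$-algebra of a Cuntz–Krieger $\Lambda$-family. A $\Lambda$-semibranching function system on $(X,\mu)$: measurable $D_\lambda$, prefixing maps $\tau_\lambda:D_\lambda\to X$ with ranges $R_\lambda=\tau_\lambda(D_\lambda)$, coding maps $\tau^m$ such that for each $m\in\mathbb{N}^k$ $\{\tau_\lambda:d(\lambda)=m\}$ is a semibranching function system with coding map $\tau^m$ ($0<\mu(D_\lambda)<\infty$, ranges of finite measure, a.e. disjoint, covering $X$ a.e., $d(\mu\circ\tau_\lambda)/d\mu>0$ a.e., $\tau^m\circ\tau_\lambda=\mathrm{id}$), $\tau_v=\mathrm{id}$ for $v\in\Lambda^0$, $R_\nu\subseteq D_\lambda$ a.e. and $\tau_\lambda\tau_\nu=\tau_{\lambda\nu}$ a.e., $\tau^m\tau^n=\tau^{m+n}$. A $\Lambda$-projective representation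 arising from it: choose $f_\lambda\in L^2$ with $0\ne d(\mu\circ\tau_\lambda^{-1})/d\mu=|f_\lambda|^2$, $f_\lambda(f_\nu\circ\tau^{d(\lambda)})=f_{\lambda\nu}$, and set $T_\lambda f=f_\lambda\cdot(f\circ\tau^{d(\lambda)})$. A representation $\{t_\lambda\}$ on $\mathcal H$ is monic if all $t_\lambda\ne0$ and some $\xi$ satisfies $\overline{\mathrm{span}}\{t_\lambda t_\lambda^*\xi\}=\mathcal H$. *)

theory Defs
  imports "HOL-Probability.Probability"
begin

text \<open>Degrees in N^k are modelled as functions nat => nat vanishing from k on.\<close>
definition degs :: "nat \<Rightarrow> (nat \<Rightarrow> nat) set" where
  "degs k = {m. \<forall>i\<ge>k. m i = 0}"

text \<open>A k-graph: a countable small category with morphism set L, objects (identity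
  morphisms) V, range r, source s, composition c (c a b defined when s a = r b),
  and a degree functor d into N^k with the unique factorisation property.\<close>
definition kgraph ::
  "nat \<Rightarrow> 'p set \<Rightarrow> 'p set \<Rightarrow> ('p \<Rightarrow> 'p) \<Rightarrow> ('p \<Rightarrow> 'p) \<Rightarrow> ('p \<Rightarrow> 'p \<Rightarrow> 'p)
    \<Rightarrow> ('p \<Rightarrow> nat \<Rightarrow> nat) \<Rightarrow> bool" where
  "kgraph k L V r s c d \<longleftrightarrow>
     countable L \<and> V \<subseteq> L \<and>
     (\<forall>a\<in>L. r a \<in> V \<and> s a \<in> V) \<and>
     (\<forall>v\<in>V. r v = v \<and> s v = v) \<and>
     (\<forall>a\<in>L. c (r a) a = a \<and> c a (s a) = a) \<and>
     (\<forall>a\<in>L. \<forall>b\<in>L. s a = r b \<longrightarrow> c a b \<in> L \<and> r (c a b) = r a \<and> s (c a b) = s b) \<and>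
     (\<forall>a\<in>L. \<forall>b\<in>L. \<forall>e\<in>L. s a = r b \<and> s b = r e \<longrightarrow> c (c a b) e = c a (c b e)) \<and>
     (\<forall>a\<in>L. d a \<in> degs k) \<and>
     (\<forall>a\<in>L. \<forall>b\<in>L. s a = r b \<longrightarrow> d (c a b) = (\<lambda>i. d a i + d b i)) \<and>
     (\<forall>a\<in>L. \<forall>m\<in>degs k. \<forall>n\<in>degs k. d a = (\<lambda>i. m i + n i) \<longrightarrow>
        (\<exists>!p. fst p \<in> L \<and> snd p \<in> L \<and> s (fst p) = r (snd p) \<and>
              d (fst p) = m \<and> d (snd p) = n \<and> c (fst p) (snd p) = a))"

definition row_finite ::
  "nat \<Rightarrow> 'p set \<Rightarrow> 'p set \<Rightarrow> ('p \<Rightarrow> 'p) \<Rightarrow> ('p \<Rightarrow> nat \<Rightarrow> nat) \<Rightarrow> bool" where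
  "row_finite k L V r d \<longleftrightarrow> (\<forall>v\<in>V. \<forall>m\<in>degs k. finite {a\<in>L. r a = v \<and> d a = m})"

definition source_free ::
  "nat \<Rightarrow> 'p set \<Rightarrow> 'p set \<Rightarrow> ('p \<Rightarrow> 'p) \<Rightarrow> ('p \<Rightarrow> nat \<Rightarrow> nat) \<Rightarrow> bool" where
  "source_free k L V r d \<longleftrightarrow> (\<forall>v\<in>V. \<forall>m\<in>degs k. {a\<in>L. r a = v \<and> d a = m} \<noteq> {})"

definition Rng :: "('p \<Rightarrow> 'x set) \<Rightarrow> ('p \<Rightarrow> 'x \<Rightarrow> 'x) \<Rightarrow> 'p \<Rightarrow> 'x set" where
  "Rng D tau a = tau a ` D a"

text \<open>The Radon-Nikodym condition d(mu o tau_a)/d mu > 0 a.e. is stated as: the measure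
  A |-> mu(tau_a(A)) on D_a has a density g w.r.t. mu that is positive a.e. on D_a.\<close>
definition sbfs :: "'x measure \<Rightarrow> 'p set \<Rightarrow> ('p \<Rightarrow> 'x set) \<Rightarrow> ('p \<Rightarrow> 'x \<Rightarrow> 'x)
    \<Rightarrow> ('x \<Rightarrow> 'x) \<Rightarrow> bool" where
  "sbfs M I D tau cod \<longleftrightarrow>
     cod \<in> measurable M M \<and>
     (\<forall>a\<in>I. D a \<in> sets M \<and> 0 < emeasure M (D a) \<and> emeasure M (D a) < \<infinity> \<and>
        tau a \<in> measurable (restrict_space M (D a)) M \<and>
        Rng D tau a \<in> sets M \<and> emeasure M (Rng D tau a) < \<infinity> \<and>
        (\<exists>g\<in>borel_measurable M. (AE x in M. x \<in> D a \<longrightarrow> 0 < g x) \<and>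
            (\<forall>A\<in>sets M. A \<subseteq> D a \<longrightarrow>
               emeasure M (tau a ` A) = (\<integral>\<^sup>+ x. g x * indicator A x \<partial>M))) \<and>
        (\<forall>x\<in>D a. cod (tau a x) = x)) \<and>
     (\<forall>a\<in>I. \<forall>b\<in>I. a \<noteq> b \<longrightarrow> emeasure M (Rng D tau a \<inter> Rng D tau b) = 0) \<and>
     emeasure M (space M - (\<Union>a\<in>I. Rng D tau a)) = 0"

definition Lambda_sbfs ::
  "nat \<Rightarrow> 'p set \<Rightarrow> 'p set \<Rightarrow> ('p \<Rightarrow> 'p) \<Rightarrow> ('p \<Rightarrow> 'p) \<Rightarrow> ('p \<Rightarrow> 'p \<Rightarrow> 'p)
    \<Rightarrow> ('p \<Rightarrow> nat \<Rightarrow> nat) \<Rightarrow> 'x measure \<Rightarrow> ('p \<Rightarrow> 'x set) \<Rightarrow> ('p \<Rightarrow> 'x \<Rightarrow> 'x)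
    \<Rightarrow> ((nat \<Rightarrow> nat) \<Rightarrow> 'x \<Rightarrow> 'x) \<Rightarrow> bool" where
  "Lambda_sbfs k L V r s c d M D tau tauc \<longleftrightarrow>
     (\<forall>m\<in>degs k. sbfs M {a\<in>L. d a = m} D tau (tauc m)) \<and>
     (\<forall>v\<in>V. \<forall>x\<in>D v. tau v x = x) \<and>
     (\<forall>a\<in>L. \<forall>b\<in>L. s a = r b \<longrightarrow>
        emeasure M (Rng D tau b - D a) = 0 \<and>
        (AE x in M. x \<in> D b \<longrightarrow> tau a (tau b x) = tau (c a b) x)) \<and>
     (\<forall>m\<in>degs k. \<forall>n\<in>degs k. \<forall>x\<in>space M. tauc m (tauc n x) = tauc (\<lambda>i. m i + n i) x)"

definition L2 :: "'x measure \<Rightarrow> ('x \<Rightarrow> complex) set" where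
  "L2 M = {f. f \<in> borel_measurable M \<and> integrable M (\<lambda>x. (cmod (f x))\<^sup>2)}"

definition L2_inner :: "'x measure \<Rightarrow> ('x \<Rightarrow> complex) \<Rightarrow> ('x \<Rightarrow> complex) \<Rightarrow> complex" where
  "L2_inner M f g = (\<integral>x. f x * cnj (g x) \<partial>M)"

definition proj_rep_data ::
  "'p set \<Rightarrow> ('p \<Rightarrow> 'p) \<Rightarrow> ('p \<Rightarrow> 'p) \<Rightarrow> ('p \<Rightarrow> 'p \<Rightarrow> 'p) \<Rightarrow> ('p \<Rightarrow> nat \<Rightarrow> nat)
    \<Rightarrow> 'x measure \<Rightarrow> ('p \<Rightarrow> 'x set) \<Rightarrow> ('p \<Rightarrow> 'x \<Rightarrow> 'x) \<Rightarrow> ((nat \<Rightarrow> nat) \<Rightarrow> 'x \<Rightarrow> 'x)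
    \<Rightarrow> ('p \<Rightarrow> 'x \<Rightarrow> complex) \<Rightarrow> bool" where
  "proj_rep_data L r s c d M D tau tauc f \<longleftrightarrow>
     (\<forall>a\<in>L. f a \<in> L2 M \<and> \<not> (AE x in M. f a x = 0) \<and>
        (\<forall>A\<in>sets M. emeasure M {y\<in>D a. tau a y \<in> A}
                     = (\<integral>\<^sup>+ x. ennreal ((cmod (f a x))\<^sup>2) * indicator A x \<partial>M))) \<and>
     (\<forall>a\<in>L. \<forall>b\<in>L. s a = r b \<longrightarrow>
        (AE x in M. f a x * f b (tauc (d a) x) = f (c a b) x))"

definition proj_rep_op ::
  "('p \<Rightarrow> nat \<Rightarrow> nat) \<Rightarrow> ((nat \<Rightarrow> nat) \<Rightarrow> 'x \<Rightarrow> 'x) \<Rightarrow> ('p \<Rightarrow> 'x \<Rightarrow> complex)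
    \<Rightarrow> 'p \<Rightarrow> ('x \<Rightarrow> complex) \<Rightarrow> ('x \<Rightarrow> complex)" where
  "proj_rep_op d tauc f a h = (\<lambda>x. f a x * h (tauc (d a) x))"

text \<open>Monic representation on L^2(X,mu): every T_a nonzero, and some xi whose
  vectors T_a T_a^* xi have dense linear span (S a denotes the adjoint of T a).\<close>
definition monic :: "'x measure \<Rightarrow> 'p set
    \<Rightarrow> ('p \<Rightarrow> ('x \<Rightarrow> complex) \<Rightarrow> ('x \<Rightarrow> complex)) \<Rightarrow> bool" where
  "monic M L T \<longleftrightarrow>
     (\<forall>a\<in>L. \<exists>h\<in>L2 M. \<not> (AE x in M. T a h x = 0)) \<and>
     (\<exists>xi\<in>L2 M. \<exists>S.
        (\<forall>a\<in>L. \<forall>g\<in>L2 M. S a g \<in> L2 M) \<and>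
        (\<forall>a\<in>L. \<forall>h\<in>L2 M. \<forall>g\<in>L2 M. L2_inner M (T a h) g = L2_inner M h (S a g)) \<and>
        (\<forall>h\<in>L2 M. \<forall>e>0. \<exists>F cf. finite F \<and> F \<subseteq> L \<and>
           (\<integral>x. (cmod (h x - (\<Sum>a\<in>F. cf a * T a (S a xi) x)))\<^sup>2 \<partial>M) < e))"

end

theory Submission
  imports Defs
begin

lemma borel_measurable_cnj'[measurable]:
  "f \<in> borel_measurable M \<Longrightarrow> (\<lambda>x. cnj (f x)) \<in> borel_measurable M"
  by (rule borel_measurable_continuous_on[where f=cnj]) (auto intro: continuous_intros)

lemma L2_meas: "u \<in> L2 M \<Longrightarrow> u \<in> borel_measurable M"
  by (simp add: L2_def)

lemma L2_prod_int:
  assumes "u \<in> L2 M" "w \<in> L2 M"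
  shows "integrable M (\<lambda>x. u x * cnj (w x))"
proof (rule Bochner_Integration.integrable_bound)
  show "integrable M (\<lambda>x. (cmod (u x))\<^sup>2 + (cmod (w x))\<^sup>2)"
    using assms by (auto simp: L2_def)
  show "(\<lambda>x. u x * cnj (w x)) \<in> borel_measurable M" using assms[THEN L2_meas] by measurable
  show "AE x in M. norm (u x * cnj (w x)) \<le> norm ((cmod (u x))\<^sup>2 + (cmod (w x))\<^sup>2)"
  proof (rule AE_I2)
    fix x
    have "cmod (u x) * cmod (w x) \<le> (cmod (u x))\<^sup>2 + (cmod (w x))\<^sup>2"
      using sum_squares_bound[of "cmod (u x)" "cmod (w x)"]
        mult_nonneg_nonneg[OF norm_ge_zero norm_ge_zero, of "u x" "w x"] by linarith
    then show "norm (u x * cnj (w x)) \<le> norm ((cmod (u x))\<^sup>2 + (cmod (w x))\<^sup>2)"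
      by (simp add: norm_mult)
  qed
qed

lemma L2_add:
  assumes "u \<in> L2 M" "w \<in> L2 M"
  shows "(\<lambda>x. u x + w x) \<in> L2 M"
  unfolding L2_def
proof safe
  show "(\<lambda>x. u x + w x) \<in> borel_measurable M" using assms by (auto simp: L2_def)
  show "integrable M (\<lambda>x. (cmod (u x + w x))\<^sup>2)"
  proof (rule Bochner_Integration.integrable_bound)
    show "integrable M (\<lambda>x. 2 * (cmod (u x))\<^sup>2 + 2 * (cmod (w x))\<^sup>2)"
      using assms by (auto simp: L2_def)
    show "(\<lambda>x. (cmod (u x + w x))\<^sup>2) \<in> borel_measurable M" using assms by (auto simp: L2_def)
    show "AE x in M. norm ((cmod (u x + w x))\<^sup>2) \<le> norm (2 * (cmod (u x))\<^sup>2 + 2 * (cmod (w x))\<^sup>2)"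
    proof (rule AE_I2)
      fix x
      have t: "cmod (u x + w x) \<le> cmod (u x) + cmod (w x)" by (rule norm_triangle_ineq)
      have "(cmod (u x + w x))\<^sup>2 \<le> (cmod (u x) + cmod (w x))\<^sup>2"
        using t by (simp add: power_mono)
      also have "\<dots> \<le> 2 * (cmod (u x))\<^sup>2 + 2 * (cmod (w x))\<^sup>2"
        using sum_squares_bound[of "cmod (u x)" "cmod (w x)"] by (simp add: power2_sum)
      finally show "norm ((cmod (u x + w x))\<^sup>2) \<le> norm (2 * (cmod (u x))\<^sup>2 + 2 * (cmod (w x))\<^sup>2)"
        by simp
    qed
  qed
qed

lemma L2_cmult:
  assumes "u \<in> L2 M"
  shows "(\<lambda>x. a * u x) \<in> L2 M"
  using assms by (auto simp: L2_def norm_mult power_mult_distrib)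

lemma L2_zero: "(\<lambda>x. 0) \<in> L2 M"
  by (auto simp: L2_def)

lemma L2_sum:
  assumes "\<And>i. i \<in> F \<Longrightarrow> u i \<in> L2 M"
  shows "(\<lambda>x. \<Sum>i\<in>F. u i x) \<in> L2 M"
  using assms
proof (induction F rule: infinite_finite_induct)
  case (infinite A) then show ?case by (simp add: L2_zero)
next
  case empty then show ?case by (simp add: L2_zero)
next
  case (insert a A)
  then show ?case by (simp add: L2_add)
qed

lemma cmod_sq_c: "(complex_of_real (cmod z))\<^sup>2 = z * cnj z"
  using complex_norm_square[of z] by simp

lemma ind_scaleR_c: "indicator A x *\<^sub>R (z::complex) = indicator A x * z"
  by (simp add: indicator_def)

locale sbf1 =
  fixes M :: "'x measure" and fa :: "'x \<Rightarrow> complex" and Da :: "'x set"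
    and ta :: "'x \<Rightarrow> 'x" and tc :: "'x \<Rightarrow> 'x"
  assumes fa_meas[measurable]: "fa \<in> borel_measurable M"
    and Da[measurable]: "Da \<in> sets M"
    and ta_meas: "ta \<in> measurable (restrict_space M Da) M"
    and dens: "\<forall>A\<in>sets M. emeasure M {y\<in>Da. ta y \<in> A}
                     = (\<integral>\<^sup>+ x. ennreal ((cmod (fa x))\<^sup>2) * indicator A x \<partial>M)"
    and tc_meas[measurable]: "tc \<in> measurable M M"
    and tcta: "\<forall>y\<in>Da. tc (ta y) = y"
begin

lemma Da_sub: "Da \<subseteq> space M" using Da sets.sets_into_space by blast

lemma dens_eq: "density M (\<lambda>x. ennreal ((cmod (fa x))\<^sup>2)) = distr (restrict_space M Da) M ta"
proof (rule measure_eqI)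
  show "sets (density M (\<lambda>x. ennreal ((cmod (fa x))\<^sup>2))) = sets (distr (restrict_space M Da) M ta)"
    by simp
  fix A assume "A \<in> sets (density M (\<lambda>x. ennreal ((cmod (fa x))\<^sup>2)))"
  then have A: "A \<in> sets M" by simp
  have "emeasure (distr (restrict_space M Da) M ta) A
      = emeasure (restrict_space M Da) (ta -` A \<inter> space (restrict_space M Da))"
    by (rule emeasure_distr[OF ta_meas A])
  also have "\<dots> = emeasure M (ta -` A \<inter> Da)"
    using Da_sub by (subst emeasure_restrict_space) (auto simp: space_restrict_space)
  also have "ta -` A \<inter> Da = {y\<in>Da. ta y \<in> A}" by auto
  also have "emeasure M \<dots> = (\<integral>\<^sup>+ x. ennreal ((cmod (fa x))\<^sup>2) * indicator A x \<partial>M)"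
    using dens A by blast
  also have "\<dots> = emeasure (density M (\<lambda>x. ennreal ((cmod (fa x))\<^sup>2))) A"
    using A by (subst emeasure_density) auto
  finally show "emeasure (density M (\<lambda>x. ennreal ((cmod (fa x))\<^sup>2))) A
      = emeasure (distr (restrict_space M Da) M ta) A" by simp
qed

lemma nn_key:
  assumes [measurable]: "\<psi> \<in> borel_measurable M"
  shows "(\<integral>\<^sup>+ x. ennreal ((cmod (fa x))\<^sup>2) * \<psi> x \<partial>M) = (\<integral>\<^sup>+ y. \<psi> (ta y) * indicator Da y \<partial>M)"
proof -
  have "(\<integral>\<^sup>+ x. ennreal ((cmod (fa x))\<^sup>2) * \<psi> x \<partial>M)
      = integral\<^sup>N (density M (\<lambda>x. ennreal ((cmod (fa x))\<^sup>2))) \<psi>"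
    by (subst nn_integral_density) auto
  also have "\<dots> = integral\<^sup>N (distr (restrict_space M Da) M ta) \<psi>" by (simp add: dens_eq)
  also have "\<dots> = (\<integral>\<^sup>+ y. \<psi> (ta y) \<partial>restrict_space M Da)"
    by (rule nn_integral_distr[OF ta_meas]) simp
  also have "\<dots> = (\<integral>\<^sup>+ y. \<psi> (ta y) * indicator Da y \<partial>M)"
    by (rule nn_integral_restrict_space) simp
  finally show ?thesis .
qed

lemma int_key:
  fixes \<psi> :: "'x \<Rightarrow> complex"
  assumes [measurable]: "\<psi> \<in> borel_measurable M"
  shows "(\<integral> x. (cmod (fa x))\<^sup>2 *\<^sub>R \<psi> x \<partial>M) = (\<integral> y. indicator Da y *\<^sub>R \<psi> (ta y) \<partial>M)"
proof -
  have "(\<integral> x. (cmod (fa x))\<^sup>2 *\<^sub>R \<psi> x \<partial>M)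
      = integral\<^sup>L (density M (\<lambda>x. ennreal ((cmod (fa x))\<^sup>2))) \<psi>"
    by (subst integral_density) auto
  also have "\<dots> = integral\<^sup>L (distr (restrict_space M Da) M ta) \<psi>" by (simp add: dens_eq)
  also have "\<dots> = (\<integral> y. \<psi> (ta y) \<partial>restrict_space M Da)"
    by (rule integral_distr[OF ta_meas]) simp
  also have "\<dots> = (\<integral> y. indicator Da y *\<^sub>R \<psi> (ta y) \<partial>M)"
    by (rule integral_restrict_space) simp
  finally show ?thesis .
qed

lemma nn_key2:
  assumes [measurable]: "\<phi> \<in> borel_measurable M"
  shows "(\<integral>\<^sup>+ x. ennreal ((cmod (fa x))\<^sup>2) * \<phi> (tc x) \<partial>M) = (\<integral>\<^sup>+ y. \<phi> y * indicator Da y \<partial>M)"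
proof -
  have "(\<integral>\<^sup>+ x. ennreal ((cmod (fa x))\<^sup>2) * \<phi> (tc x) \<partial>M) = (\<integral>\<^sup>+ y. \<phi> (tc (ta y)) * indicator Da y \<partial>M)"
    by (rule nn_key) measurable
  also have "\<dots> = (\<integral>\<^sup>+ y. \<phi> y * indicator Da y \<partial>M)"
    by (rule nn_integral_cong) (auto simp: tcta indicator_def)
  finally show ?thesis .
qed

lemma int_key2:
  fixes \<phi> :: "'x \<Rightarrow> complex"
  assumes [measurable]: "\<phi> \<in> borel_measurable M"
  shows "(\<integral> x. (cmod (fa x))\<^sup>2 *\<^sub>R \<phi> (tc x) \<partial>M) = (\<integral> y. indicator Da y *\<^sub>R \<phi> y \<partial>M)"
proof -
  have "(\<integral> x. (cmod (fa x))\<^sup>2 *\<^sub>R \<phi> (tc x) \<partial>M) = (\<integral> y. indicator Da y *\<^sub>R \<phi> (tc (ta y)) \<partial>M)"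
    by (rule int_key) measurable
  also have "\<dots> = (\<integral> y. indicator Da y *\<^sub>R \<phi> y \<partial>M)"
    by (rule Bochner_Integration.integral_cong) (auto simp: tcta indicator_def)
  finally show ?thesis .
qed

lemma T_L2:
  assumes g: "g \<in> L2 M"
  shows "(\<lambda>x. fa x * g (tc x)) \<in> L2 M"
proof -
  have [measurable]: "g \<in> borel_measurable M" using g by (simp add: L2_def)
  have "(\<integral>\<^sup>+ x. ennreal (norm ((cmod (fa x * g (tc x)))\<^sup>2)) \<partial>M)
      = (\<integral>\<^sup>+ x. ennreal ((cmod (fa x))\<^sup>2) * ennreal ((cmod (g (tc x)))\<^sup>2) \<partial>M)"
    by (rule nn_integral_cong) (simp add: norm_mult power_mult_distrib ennreal_mult)
  also have "\<dots> = (\<integral>\<^sup>+ y. ennreal ((cmod (g y))\<^sup>2) * indicator Da y \<partial>M)"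
    by (rule nn_key2) measurable
  also have "\<dots> \<le> (\<integral>\<^sup>+ y. ennreal (norm ((cmod (g y))\<^sup>2)) \<partial>M)"
    by (rule nn_integral_mono) (auto simp: indicator_def)
  also have "\<dots> < \<infinity>" using g by (auto simp: L2_def integrable_iff_bounded)
  finally show ?thesis unfolding L2_def by (auto simp: integrable_iff_bounded)
qed

lemma T_inner:
  assumes [measurable]: "g \<in> borel_measurable M" "k \<in> borel_measurable M"
  shows "L2_inner M (\<lambda>x. fa x * g (tc x)) (\<lambda>x. fa x * k (tc x))
       = (\<integral> y. indicator Da y * (g y * cnj (k y)) \<partial>M)"
proof -
  have "L2_inner M (\<lambda>x. fa x * g (tc x)) (\<lambda>x. fa x * k (tc x))
      = (\<integral> x. (cmod (fa x))\<^sup>2 *\<^sub>R (g (tc x) * cnj (k (tc x))) \<partial>M)"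
    unfolding L2_inner_def
    by (rule Bochner_Integration.integral_cong)
       (auto simp: scaleR_conv_of_real cmod_sq_c algebra_simps)
  also have "\<dots> = (\<integral> y. indicator Da y *\<^sub>R (g y * cnj (k y)) \<partial>M)"
    by (rule int_key2[where \<phi>="\<lambda>y. g y * cnj (k y)"]) measurable
  also have "\<dots> = (\<integral> y. indicator Da y * (g y * cnj (k y)) \<partial>M)"
    by (simp only: ind_scaleR_c)
  finally show ?thesis .
qed

end

locale sbf2 = sbf1 +
  fixes R :: "'x set" and g :: "'x \<Rightarrow> ennreal"
  assumes R_def: "R = ta ` Da"
    and R_sets[measurable]: "R \<in> sets M"
    and g_meas[measurable]: "g \<in> borel_measurable M"
    and RN: "\<forall>A\<in>sets M. A \<subseteq> Da \<longrightarrow> emeasure M (ta ` A) = (\<integral>\<^sup>+ x. g x * indicator A x \<partial>M)"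
begin

lemma fa_off: "AE x in M. x \<notin> R \<longrightarrow> fa x = 0"
proof -
  have A: "space M - R \<in> sets M" by simp
  have e: "{y\<in>Da. ta y \<in> space M - R} = {}" using R_def by auto
  have "emeasure M {y\<in>Da. ta y \<in> space M - R} = (\<integral>\<^sup>+ x. ennreal ((cmod (fa x))\<^sup>2) * indicator (space M - R) x \<partial>M)"
    using dens A by blast
  then have "(\<integral>\<^sup>+ x. ennreal ((cmod (fa x))\<^sup>2) * indicator (space M - R) x \<partial>M) = 0"
    unfolding e by simp
  then have "AE x in M. ennreal ((cmod (fa x))\<^sup>2) * indicator (space M - R) x = 0"
    by (subst (asm) nn_integral_0_iff_AE) auto
  then show ?thesis
    by (rule AE_mp) (auto intro!: AE_I2 simp: indicator_def)
qed

lemma B_null: "{x\<in>R. fa x = 0} \<in> null_sets M"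
proof -
  define B where "B = {x\<in>R. fa x = 0}"
  have B[measurable]: "B \<in> sets M" unfolding B_def
    using R_sets by measurable
  define A where "A = {y\<in>Da. ta y \<in> B}"
  have "A = ta -` B \<inter> space (restrict_space M Da)"
    using Da_sub by (auto simp: A_def space_restrict_space)
  then have "A \<in> sets (restrict_space M Da)"
    using measurable_sets[OF ta_meas B] by simp
  then have A: "A \<in> sets M" "A \<subseteq> Da"
    by (auto simp: sets_restrict_space_iff)
  have "emeasure M A = (\<integral>\<^sup>+ x. ennreal ((cmod (fa x))\<^sup>2) * indicator B x \<partial>M)"
    using dens B unfolding A_def by blast
  also have "\<dots> = (\<integral>\<^sup>+ x. 0 \<partial>M)"
    by (rule nn_integral_cong) (auto simp: indicator_def B_def)
  finally have "A \<in> null_sets M" using A by auto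
  have "ta ` A = B" unfolding A_def B_def using R_def by auto
  then have "emeasure M B = (\<integral>\<^sup>+ x. g x * indicator A x \<partial>M)"
    using RN A by metis
  also have "\<dots> = 0" using \<open>A \<in> null_sets M\<close> by (rule nn_integral_null_set)
  finally show ?thesis using B B_def by auto
qed

lemma surj:
  assumes h: "h \<in> L2 M" and hz: "\<forall>x. x \<notin> R \<longrightarrow> h x = 0"
  shows "\<exists>k\<in>L2 M. (\<forall>y. y \<notin> Da \<longrightarrow> k y = 0) \<and> (AE x in M. fa x * k (tc x) = h x)"
proof -
  have hm[measurable]: "h \<in> borel_measurable M" using h by (simp add: L2_def)
  define k where "k = (\<lambda>y. if y \<in> Da then h (ta y) / fa (ta y) else 0)"
  have "(\<lambda>y. (\<lambda>x. h x / fa x) (ta y)) \<in> measurable (restrict_space M Da) borel"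
    by (rule measurable_compose[OF ta_meas]) measurable
  then have km[measurable]: "k \<in> borel_measurable M"
    unfolding k_def by (subst (asm) measurable_restrict_space_iff) auto
  have "(\<integral>\<^sup>+ y. ennreal (norm ((cmod (k y))\<^sup>2)) \<partial>M)
      = (\<integral>\<^sup>+ y. ennreal ((cmod (h (ta y) / fa (ta y)))\<^sup>2) * indicator Da y \<partial>M)"
    by (rule nn_integral_cong) (auto simp: k_def indicator_def)
  also have "\<dots> = (\<integral>\<^sup>+ x. ennreal ((cmod (fa x))\<^sup>2) * ennreal ((cmod (h x / fa x))\<^sup>2) \<partial>M)"
    by (rule nn_key[symmetric]) measurable
  also have "\<dots> \<le> (\<integral>\<^sup>+ x. ennreal (norm ((cmod (h x))\<^sup>2)) \<partial>M)"
  proof (rule nn_integral_mono)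
    fix x
    show "ennreal ((cmod (fa x))\<^sup>2) * ennreal ((cmod (h x / fa x))\<^sup>2) \<le> ennreal (norm ((cmod (h x))\<^sup>2))"
      by (cases "fa x = 0")
         (auto simp: ennreal_mult[symmetric] norm_divide power_divide)
  qed
  also have "\<dots> < \<infinity>" using h by (auto simp: L2_def integrable_iff_bounded)
  finally have kL2: "k \<in> L2 M" unfolding L2_def by (auto simp: integrable_iff_bounded)
  have "AE x in M. x \<notin> {x\<in>R. fa x = 0}" by (rule AE_not_in[OF B_null])
  with fa_off have "AE x in M. fa x * k (tc x) = h x"
  proof eventually_elim
    case (elim x)
    show ?case
    proof (cases "x \<in> R")
      case True
      then obtain y where y: "y \<in> Da" "x = ta y" using R_def by auto
      then have "tc x = y" using tcta by auto
      then show ?thesis using True elim y by (auto simp: k_def)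
    next
      case False
      then show ?thesis using elim hz by auto
    qed
  qed
  moreover have "\<forall>y. y \<notin> Da \<longrightarrow> k y = 0" by (simp add: k_def)
  ultimately show ?thesis using kL2 by blast
qed

end

lemma L2_inner_cnj: "cnj (L2_inner M p q) = L2_inner M q p"
  unfolding L2_inner_def Bochner_Integration.integral_cnj[symmetric] by (simp add: mult.commute)

lemma L2_sq_int: "u \<in> L2 M \<Longrightarrow> integrable M (\<lambda>x. (cmod (u x))\<^sup>2)"
  by (simp add: L2_def)

lemma pt_ident: "(cmod (h - u))\<^sup>2 = (cmod h)\<^sup>2 + (cmod u)\<^sup>2 - 2 * Re (u * cnj h)"
  unfolding cmod_power2 by (simp add: power2_eq_square algebra_simps)

lemma final_ineq:
  assumes h: "h \<in> L2 M" and u: "u \<in> L2 M" and o: "L2_inner M u h = 0"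
  shows "(\<integral>x. (cmod (h x))\<^sup>2 \<partial>M) \<le> (\<integral>x. (cmod (h x - u x))\<^sup>2 \<partial>M)"
proof -
  have i1: "integrable M (\<lambda>x. (cmod (h x))\<^sup>2)" using h by (rule L2_sq_int)
  have i2: "integrable M (\<lambda>x. (cmod (u x))\<^sup>2)" using u by (rule L2_sq_int)
  have i3: "integrable M (\<lambda>x. u x * cnj (h x))" using u h by (rule L2_prod_int)
  have i4: "integrable M (\<lambda>x. 2 * Re (u x * cnj (h x)))"
    by (rule integrable_mult_right) (rule integrable_Re[OF i3])
  have "(\<integral>x. (cmod (h x - u x))\<^sup>2 \<partial>M)
      = (\<integral>x. (cmod (h x))\<^sup>2 + (cmod (u x))\<^sup>2 - 2 * Re (u x * cnj (h x)) \<partial>M)"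
    by (simp only: pt_ident)
  also have "\<dots> = (\<integral>x. (cmod (h x))\<^sup>2 + (cmod (u x))\<^sup>2 \<partial>M)
       - (\<integral>x. 2 * Re (u x * cnj (h x)) \<partial>M)"
    by (rule Bochner_Integration.integral_diff[OF Bochner_Integration.integrable_add[OF i1 i2] i4])
  also have "(\<integral>x. (cmod (h x))\<^sup>2 + (cmod (u x))\<^sup>2 \<partial>M) = (\<integral>x. (cmod (h x))\<^sup>2 \<partial>M) + (\<integral>x. (cmod (u x))\<^sup>2 \<partial>M)"
    by (rule Bochner_Integration.integral_add[OF i1 i2])
  also have "(\<integral>x. 2 * Re (u x * cnj (h x)) \<partial>M) = 2 * Re (L2_inner M u h)"
    unfolding L2_inner_def integral_mult_right_zero integral_Re[OF i3] by simp
  also have "\<dots> = 0" using o by simp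
  finally show ?thesis
    using integral_nonneg_AE[of "\<lambda>x. (cmod (u x))\<^sup>2" M] by simp
qed

lemma posL2:
  assumes h: "h \<in> L2 M" and A: "A \<in> sets M" "0 < emeasure M A" and nz: "\<forall>x\<in>A. h x \<noteq> 0"
  shows "0 < (\<integral>x. (cmod (h x))\<^sup>2 \<partial>M)"
proof -
  have i: "integrable M (\<lambda>x. (cmod (h x))\<^sup>2)" using h by (rule L2_sq_int)
  have ge: "0 \<le> (\<integral>x. (cmod (h x))\<^sup>2 \<partial>M)" by (rule integral_nonneg_AE) simp
  have "(\<integral>x. (cmod (h x))\<^sup>2 \<partial>M) \<noteq> 0"
  proof
    assume "(\<integral>x. (cmod (h x))\<^sup>2 \<partial>M) = 0"
    then have "AE x in M. (cmod (h x))\<^sup>2 = 0"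
      using integral_nonneg_eq_0_iff_AE[OF i] by simp
    then have "AE x in M. x \<notin> A" by (rule AE_mp) (use nz in \<open>auto intro!: AE_I2\<close>)
    then have "A \<in> null_sets M" using AE_iff_null_sets[OF A(1)] by simp
    then show False using A(2) by (metis null_setsD1 order_less_irrefl)
  qed
  then show ?thesis using ge less_eq_real_def by auto
qed

lemma L2_ind:
  assumes "A \<in> sets M" "emeasure M A < \<infinity>"
  shows "(\<lambda>x. indicator A x :: complex) \<in> L2 M"
proof -
  have "(\<lambda>x. (cmod (indicator A x :: complex))\<^sup>2) = (indicator A :: _ \<Rightarrow> real)"
    by (auto simp: indicator_def)
  then show ?thesis using assms unfolding L2_def by auto
qed

lemma h_exists:
  assumes xi: "xi \<in> L2 M" and X: "X \<in> sets M" and Dm: "Dv \<in> sets M" and sub: "X \<subseteq> Dv"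
    and pos: "0 < emeasure M X" and lt: "emeasure M X < emeasure M Dv" and fin: "emeasure M Dv < \<infinity>"
  shows "\<exists>h\<in>L2 M. (\<forall>x. x \<notin> Dv \<longrightarrow> h x = 0) \<and> L2_inner M xi h = 0
            \<and> 0 < (\<integral>x. (cmod (h x))\<^sup>2 \<partial>M)"
proof -
  define u where "u = (\<lambda>x. indicator X x :: complex)"
  define w where "w = (\<lambda>x. indicator (Dv - X) x :: complex)"
  have Wm: "Dv - X \<in> sets M" using X Dm by auto
  have Xfin: "emeasure M X < \<infinity>" using lt fin by auto
  have Wfin: "emeasure M (Dv - X) < \<infinity>"
    using fin emeasure_mono[of "Dv - X" Dv M] Dm by (auto simp: top_unique)
  have Wpos: "0 < emeasure M (Dv - X)"
  proof -
    have u: "X \<union> (Dv - X) = Dv" using sub by auto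
    have "emeasure M X + emeasure M (Dv - X) = emeasure M (X \<union> (Dv - X))"
      by (rule plus_emeasure[OF X Wm]) auto
    then have e: "emeasure M Dv = emeasure M X + emeasure M (Dv - X)" unfolding u by simp
    show ?thesis
    proof (rule ccontr)
      assume "\<not> 0 < emeasure M (Dv - X)"
      then have "emeasure M (Dv - X) = 0" by simp
      then show False using e lt by simp
    qed
  qed
  have uL: "u \<in> L2 M" unfolding u_def by (rule L2_ind[OF X Xfin])
  have wL: "w \<in> L2 M" unfolding w_def by (rule L2_ind[OF Wm Wfin])
  define p where "p = L2_inner M xi u"
  define q where "q = L2_inner M xi w"
  show ?thesis
  proof (cases "p = 0")
    case True
    show ?thesis
    proof (intro bexI conjI allI impI)
      show "u \<in> L2 M" by (rule uL)
      show "u x = 0" if "x \<notin> Dv" for x using that sub by (auto simp: u_def indicator_def)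
      show "L2_inner M xi u = 0" using True p_def by simp
      show "0 < (\<integral>x. (cmod (u x))\<^sup>2 \<partial>M)" by (rule posL2[OF uL X pos]) (auto simp: u_def)
    qed
  next
    case False
    define h where "h = (\<lambda>x. cnj q * u x - cnj p * w x)"
    have hL: "h \<in> L2 M" unfolding h_def
      using L2_add[OF L2_cmult[OF uL] L2_cmult[OF wL, of "- cnj p"]] by simp
    have iu: "integrable M (\<lambda>x. xi x * cnj (u x))" by (rule L2_prod_int[OF xi uL])
    have iw: "integrable M (\<lambda>x. xi x * cnj (w x))" by (rule L2_prod_int[OF xi wL])
    have "L2_inner M xi h = (\<integral>x. q * (xi x * cnj (u x)) - p * (xi x * cnj (w x)) \<partial>M)"
      unfolding L2_inner_def h_def by (rule Bochner_Integration.integral_cong) (auto simp: algebra_simps)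
    also have "\<dots> = q * p - p * q"
      using iu iw by (simp add: p_def q_def L2_inner_def)
    also have "\<dots> = 0" by simp
    finally have o: "L2_inner M xi h = 0" .
    show ?thesis
    proof (intro bexI conjI allI impI)
      show "h \<in> L2 M" by (rule hL)
      show "h x = 0" if "x \<notin> Dv" for x using that sub by (auto simp: h_def u_def w_def indicator_def)
      show "L2_inner M xi h = 0" by (rule o)
      show "0 < (\<integral>x. (cmod (h x))\<^sup>2 \<partial>M)"
        by (rule posL2[OF hL Wm Wpos]) (use False in \<open>auto simp: h_def u_def w_def\<close>)
    qed
  qed
qed

lemma L2_inner_cong2:
  assumes "p \<in> L2 M" "q \<in> L2 M" "q' \<in> L2 M" "AE x in M. q x = q' x"
  shows "L2_inner M p q = L2_inner M p q'"
proof -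
  have [measurable]: "p \<in> borel_measurable M" "q \<in> borel_measurable M" "q' \<in> borel_measurable M"
    using assms by (auto simp: L2_def)
  have "AE x in M. p x * cnj (q x) = p x * cnj (q' x)" using assms(4) by eventually_elim simp
  then show ?thesis unfolding L2_inner_def
    by (rule integral_cong_AE[rotated 2]) measurable
qed

lemma L2_inner_cong1:
  assumes "p \<in> L2 M" "q \<in> L2 M" "p' \<in> L2 M" "AE x in M. p x = p' x"
  shows "L2_inner M p q = L2_inner M p' q"
  using L2_inner_cong2[OF assms(2,1,3,4)] L2_inner_cnj by metis

lemma sbfsD1: "sbfs M I D tau cod \<Longrightarrow> cod \<in> measurable M M"
  unfolding sbfs_def by (elim conjE) assumption

lemma sbfsD2: "sbfs M I D tau cod \<Longrightarrow> \<forall>a\<in>I. D a \<in> sets M \<and> 0 < emeasure M (D a) \<and> emeasure M (D a) < \<infinity> \<and>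
        tau a \<in> measurable (restrict_space M (D a)) M \<and>
        Rng D tau a \<in> sets M \<and> emeasure M (Rng D tau a) < \<infinity> \<and>
        (\<exists>g\<in>borel_measurable M. (AE x in M. x \<in> D a \<longrightarrow> 0 < g x) \<and>
            (\<forall>A\<in>sets M. A \<subseteq> D a \<longrightarrow>
               emeasure M (tau a ` A) = (\<integral>\<^sup>+ x. g x * indicator A x \<partial>M))) \<and>
        (\<forall>x\<in>D a. cod (tau a x) = x)"
  unfolding sbfs_def by (elim conjE) assumption

lemma sbfsD3: "sbfs M I D tau cod \<Longrightarrow> \<forall>b\<in>I. \<forall>b'\<in>I. b \<noteq> b' \<longrightarrow> emeasure M (Rng D tau b \<inter> Rng D tau b') = 0"
  unfolding sbfs_def by (elim conjE) assumption

lemma sbfsD: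
  assumes "sbfs M I D tau cod" "a \<in> I"
  shows "cod \<in> measurable M M" "D a \<in> sets M" "emeasure M (D a) < \<infinity>"
    "tau a \<in> measurable (restrict_space M (D a)) M" "Rng D tau a \<in> sets M"
    "\<exists>g\<in>borel_measurable M. \<forall>A\<in>sets M. A \<subseteq> D a \<longrightarrow>
               emeasure M (tau a ` A) = (\<integral>\<^sup>+ x. g x * indicator A x \<partial>M)"
    "\<forall>x\<in>D a. cod (tau a x) = x"
proof -
  from sbfsD2[OF assms(1)] assms(2) have Aa: "D a \<in> sets M \<and> 0 < emeasure M (D a) \<and> emeasure M (D a) < \<infinity> \<and>
        tau a \<in> measurable (restrict_space M (D a)) M \<and>
        Rng D tau a \<in> sets M \<and> emeasure M (Rng D tau a) < \<infinity> \<and>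
        (\<exists>g\<in>borel_measurable M. (AE x in M. x \<in> D a \<longrightarrow> 0 < g x) \<and>
            (\<forall>A\<in>sets M. A \<subseteq> D a \<longrightarrow>
               emeasure M (tau a ` A) = (\<integral>\<^sup>+ x. g x * indicator A x \<partial>M))) \<and>
        (\<forall>x\<in>D a. cod (tau a x) = x)" by (rule bspec)
  show "cod \<in> measurable M M" by (rule sbfsD1[OF assms(1)])
  show "D a \<in> sets M" using Aa by (elim conjE) assumption
  show "emeasure M (D a) < \<infinity>" using Aa by (elim conjE) assumption
  show "tau a \<in> measurable (restrict_space M (D a)) M" using Aa by (elim conjE) assumption
  show "Rng D tau a \<in> sets M" using Aa by (elim conjE) assumption
  show "\<forall>x\<in>D a. cod (tau a x) = x" using Aa by (elim conjE) assumption
  have "\<exists>g\<in>borel_measurable M. (AE x in M. x \<in> D a \<longrightarrow> 0 < g x) \<and>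
            (\<forall>A\<in>sets M. A \<subseteq> D a \<longrightarrow>
               emeasure M (tau a ` A) = (\<integral>\<^sup>+ x. g x * indicator A x \<partial>M))"
    using Aa by (elim conjE) assumption
  then show "\<exists>g\<in>borel_measurable M. \<forall>A\<in>sets M. A \<subseteq> D a \<longrightarrow>
               emeasure M (tau a ` A) = (\<integral>\<^sup>+ x. g x * indicator A x \<partial>M)"
    by (elim bexE conjE) (rule bexI)
qed

theorem proposition3p9:
  fixes k :: nat and L V :: "'p set" and r s :: "'p \<Rightarrow> 'p" and c :: "'p \<Rightarrow> 'p \<Rightarrow> 'p"
    and d :: "'p \<Rightarrow> nat \<Rightarrow> nat" and M :: "'x measure" and D :: "'p \<Rightarrow> 'x set"
    and tau :: "'p \<Rightarrow> 'x \<Rightarrow> 'x" and tauc :: "(nat \<Rightarrow> nat) \<Rightarrow> 'x \<Rightarrow> 'x"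
    and v :: 'p and Xv :: "'x set"
  assumes "kgraph k L V r s c d"
    and "row_finite k L V r d"
    and "source_free k L V r d"
    and "sigma_finite_measure M"
    and "Lambda_sbfs k L V r s c d M D tau tauc"
    and "v \<in> V"
    and "\<forall>t\<in>L. r t = v \<longrightarrow> Rng D tau t = Rng D tau (c v t) \<and> Rng D tau (c v t) = D v"
    and "Xv \<in> sets M" and "Xv \<subseteq> D v"
    and "0 < emeasure M Xv" and "emeasure M Xv < emeasure M (D v)"
  shows "\<forall>f. proj_rep_data L r s c d M D tau tauc f \<longrightarrow> \<not> monic M L (proj_rep_op d tauc f)"
proof (intro allI impI notI)
  fix f
  assume pr: "proj_rep_data L r s c d M D tau tauc f"
    and mon: "monic M L (proj_rep_op d tauc f)"
  have VL: "V \<subseteq> L" using assms(1) unfolding kgraph_def by (elim conjE) assumption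
  have rs: "\<forall>a\<in>L. r a \<in> V \<and> s a \<in> V" using assms(1) unfolding kgraph_def by (elim conjE) assumption
  have idV: "\<forall>v\<in>V. r v = v \<and> s v = v" using assms(1) unfolding kgraph_def by (elim conjE) assumption
  have cid: "\<forall>a\<in>L. c (r a) a = a \<and> c a (s a) = a" using assms(1) unfolding kgraph_def by (elim conjE) assumption
  have dk: "\<forall>a\<in>L. d a \<in> degs k" using assms(1) unfolding kgraph_def by (elim conjE) assumption
  have dc: "\<forall>a\<in>L. \<forall>b\<in>L. s a = r b \<longrightarrow> d (c a b) = (\<lambda>i. d a i + d b i)"
    using assms(1) unfolding kgraph_def by (elim conjE) assumption
  have LS1: "\<forall>m\<in>degs k. sbfs M {a\<in>L. d a = m} D tau (tauc m)"
    using assms(5) unfolding Lambda_sbfs_def by (elim conjE) assumption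
  have LS2: "\<forall>v\<in>V. \<forall>x\<in>D v. tau v x = x"
    using assms(5) unfolding Lambda_sbfs_def by (elim conjE) assumption
  have LS3f: "\<forall>a\<in>L. \<forall>b\<in>L. s a = r b \<longrightarrow>
        emeasure M (Rng D tau b - D a) = 0 \<and>
        (AE x in M. x \<in> D b \<longrightarrow> tau a (tau b x) = tau (c a b) x)"
    using assms(5) unfolding Lambda_sbfs_def by (elim conjE) assumption
  have LS3: "\<forall>a\<in>L. \<forall>b\<in>L. s a = r b \<longrightarrow> emeasure M (Rng D tau b - D a) = 0"
    using LS3f by blast
  have dV: "d w = (\<lambda>i. 0)" if wV: "w \<in> V" for w
  proof -
    have wL: "w \<in> L" using wV VL by auto
    have rw: "r w = w" "s w = w" using idV wV by auto
    have cw: "c w w = w" using cid wL rw by metis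
    have "d (c w w) = (\<lambda>i. d w i + d w i)" using dc wL rw by metis
    then have "\<forall>i. d w i = d w i + d w i" unfolding cw by metis
    then show ?thesis by auto
  qed
  have RngV: "Rng D tau w = D w" if wV: "w \<in> V" for w
  proof -
    have "tau w ` D w = id ` D w" by (rule image_cong) (use LS2 wV in auto)
    then show ?thesis by (simp add: Rng_def)
  qed
  have sbA: "sbfs M {b\<in>L. d b = d a} D tau (tauc (d a))" if "a \<in> L" for a
    using LS1 dk that by blast
  have sbfacts: "tauc (d a) \<in> measurable M M \<and> D a \<in> sets M \<and> emeasure M (D a) < \<infinity> \<and>
      tau a \<in> measurable (restrict_space M (D a)) M \<and> Rng D tau a \<in> sets M \<and>
      (\<exists>g\<in>borel_measurable M. \<forall>A\<in>sets M. A \<subseteq> D a \<longrightarrow>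
               emeasure M (tau a ` A) = (\<integral>\<^sup>+ x. g x * indicator A x \<partial>M)) \<and>
      (\<forall>x\<in>D a. tauc (d a) (tau a x) = x)" if aL: "a \<in> L" for a
  proof -
    have aI: "a \<in> {b\<in>L. d b = d a}" using aL by simp
    show ?thesis using sbfsD[OF sbA[OF aL] aI] by (intro conjI)
  qed
  have prfa0: "\<forall>a\<in>L. f a \<in> L2 M \<and> \<not> (AE x in M. f a x = 0) \<and>
        (\<forall>A\<in>sets M. emeasure M {y\<in>D a. tau a y \<in> A}
                     = (\<integral>\<^sup>+ x. ennreal ((cmod (f a x))\<^sup>2) * indicator A x \<partial>M))"
    using pr unfolding proj_rep_data_def by (elim conjE) assumption
  have prfa: "f a \<in> L2 M \<and> (\<forall>A\<in>sets M. emeasure M {y\<in>D a. tau a y \<in> A}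
                     = (\<integral>\<^sup>+ x. ennreal ((cmod (f a x))\<^sup>2) * indicator A x \<partial>M))" if "a \<in> L" for a
    using bspec[OF prfa0 that] by (elim conjE) (intro conjI)
  have loc: "\<exists>g. sbf2 M (f a) (D a) (tau a) (tauc (d a)) (Rng D tau a) g" if aL: "a \<in> L" for a
  proof -
    obtain g where g: "g \<in> borel_measurable M" "\<forall>A\<in>sets M. A \<subseteq> D a \<longrightarrow>
               emeasure M (tau a ` A) = (\<integral>\<^sup>+ x. g x * indicator A x \<partial>M)"
      using sbfacts[OF aL] by blast
    have "sbf2 M (f a) (D a) (tau a) (tauc (d a)) (Rng D tau a) g"
      unfolding sbf2_def sbf1_def sbf2_axioms_def
      using sbfacts[OF aL] prfa[OF aL] g by (simp add: L2_def Rng_def)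
    then show ?thesis by blast
  qed
  have sb1: "sbf1 M (f a) (D a) (tau a) (tauc (d a))" if aL: "a \<in> L" for a
    using loc[OF aL] sbf2.axioms(1) by blast
  have TL2: "proj_rep_op d tauc f a g \<in> L2 M" if "a \<in> L" "g \<in> L2 M" for a g
    unfolding proj_rep_op_def using sbf1.T_L2[OF sb1] that by blast
  have mon2: "\<exists>xi\<in>L2 M. \<exists>S.
        (\<forall>a\<in>L. \<forall>g\<in>L2 M. S a g \<in> L2 M) \<and>
        (\<forall>a\<in>L. \<forall>h\<in>L2 M. \<forall>g\<in>L2 M. L2_inner M (proj_rep_op d tauc f a h) g = L2_inner M h (S a g)) \<and>
        (\<forall>h\<in>L2 M. \<forall>e>0. \<exists>F cf. finite F \<and> F \<subseteq> L \<and>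
           (\<integral>x. (cmod (h x - (\<Sum>a\<in>F. cf a * proj_rep_op d tauc f a (S a xi) x)))\<^sup>2 \<partial>M) < e)"
    using mon unfolding monic_def by (elim conjE) assumption
  then obtain xi S where xi: "xi \<in> L2 M"
    and SL2: "\<forall>a\<in>L. \<forall>g\<in>L2 M. S a g \<in> L2 M"
    and adj: "\<forall>a\<in>L. \<forall>h\<in>L2 M. \<forall>g\<in>L2 M.
        L2_inner M (proj_rep_op d tauc f a h) g = L2_inner M h (S a g)"
    and dense: "\<forall>h\<in>L2 M. \<forall>e>0. \<exists>F cf. finite F \<and> F \<subseteq> L \<and>
           (\<integral>x. (cmod (h x - (\<Sum>a\<in>F. cf a * proj_rep_op d tauc f a (S a xi) x)))\<^sup>2 \<partial>M) < e"
    by (elim bexE exE conjE)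
  have vL: "v \<in> L" using assms(6) VL by auto
  have Dv: "D v \<in> sets M" "emeasure M (D v) < \<infinity>" using sbfacts[OF vL] by auto
  obtain h where hL2: "h \<in> L2 M" and hz: "\<forall>x. x \<notin> D v \<longrightarrow> h x = 0"
    and ho: "L2_inner M xi h = 0" and hpos: "0 < (\<integral>x. (cmod (h x))\<^sup>2 \<partial>M)"
    using h_exists[OF xi assms(8) Dv(1) assms(9) assms(10) assms(11) Dv(2)] by blast
  have orth: "L2_inner M (proj_rep_op d tauc f a (S a xi)) h = 0" if aL: "a \<in> L" for a
  proof -
    obtain g where sb: "sbf2 M (f a) (D a) (tau a) (tauc (d a)) (Rng D tau a) g"
      using loc[OF aL] by blast
    have SxL: "S a xi \<in> L2 M" using SL2 aL xi by blast
    have TSx: "proj_rep_op d tauc f a (S a xi) \<in> L2 M" by (rule TL2[OF aL SxL])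
    show ?thesis
    proof (cases "r a = v")
      case True
      have Rv: "Rng D tau a = D v" using assms(7) aL True by metis
      obtain kk where kL: "kk \<in> L2 M" and kz: "\<forall>y. y \<notin> D a \<longrightarrow> kk y = 0"
        and kAE: "AE x in M. f a x * kk (tauc (d a) x) = h x"
        using sbf2.surj[OF sb hL2] hz Rv by auto
      have Tk: "proj_rep_op d tauc f a kk = (\<lambda>x. f a x * kk (tauc (d a) x))"
        by (simp add: proj_rep_op_def)
      have TkL: "proj_rep_op d tauc f a kk \<in> L2 M" by (rule TL2[OF aL kL])
      have kAE': "AE x in M. proj_rep_op d tauc f a kk x = h x" using kAE by (simp add: Tk)
      have "L2_inner M (proj_rep_op d tauc f a (S a xi)) h
          = L2_inner M (proj_rep_op d tauc f a (S a xi)) (proj_rep_op d tauc f a kk)"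
      proof -
        have "AE x in M. h x = proj_rep_op d tauc f a kk x" using kAE' by eventually_elim simp
        then show ?thesis by (rule L2_inner_cong2[OF TSx hL2 TkL])
      qed
      also have "\<dots> = (\<integral> y. indicator (D a) y * (S a xi y * cnj (kk y)) \<partial>M)"
        unfolding proj_rep_op_def
        by (rule sbf1.T_inner[OF sb1[OF aL]]) (use SxL kL in \<open>auto simp: L2_def\<close>)
      also have "\<dots> = L2_inner M (S a xi) kk"
        unfolding L2_inner_def
        by (rule Bochner_Integration.integral_cong) (use kz in \<open>auto simp: indicator_def\<close>)
      also have "\<dots> = cnj (L2_inner M kk (S a xi))" by (simp add: L2_inner_cnj)
      also have "L2_inner M kk (S a xi) = L2_inner M (proj_rep_op d tauc f a kk) xi"
        using adj aL kL xi by metis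
      also have "cnj (L2_inner M (proj_rep_op d tauc f a kk) xi) = L2_inner M xi (proj_rep_op d tauc f a kk)"
        by (simp add: L2_inner_cnj)
      also have "\<dots> = L2_inner M xi h"
        by (rule L2_inner_cong2[OF xi TkL hL2 kAE'])
      finally show ?thesis using ho by simp
    next
      case False
      have wV: "r a \<in> V" using rs aL by auto
      have wL: "r a \<in> L" using wV VL by auto
      have "s (r a) = r a" using idV wV by auto
      then have n1: "emeasure M (Rng D tau a - D (r a)) = 0" using LS3 wL aL by blast
      have I0: "r a \<in> {b\<in>L. d b = (\<lambda>i. 0)}" "v \<in> {b\<in>L. d b = (\<lambda>i. 0)}"
        using wL vL dV wV assms(6) by auto
      have "sbfs M {b\<in>L. d b = (\<lambda>i. 0)} D tau (tauc (\<lambda>i. 0))"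
        using LS1 by (simp add: degs_def)
      then have "emeasure M (Rng D tau (r a) \<inter> Rng D tau v) = 0"
        using I0 False sbfsD3 by metis
      then have n2: "emeasure M (D (r a) \<inter> D v) = 0" using RngV wV assms(6) by simp
      have sets: "Rng D tau a \<in> sets M" "D (r a) \<in> sets M"
        using sbfacts[OF aL] sbfacts[OF wL] by auto
      have N: "(Rng D tau a - D (r a)) \<union> (D (r a) \<inter> D v) \<in> null_sets M"
        using n1 n2 sets Dv by (auto intro!: null_sets.Un)
      have "AE x in M. x \<notin> (Rng D tau a - D (r a)) \<union> (D (r a) \<inter> D v)"
        by (rule AE_not_in[OF N])
      moreover have "AE x in M. x \<notin> Rng D tau a \<longrightarrow> f a x = 0" by (rule sbf2.fa_off[OF sb])
      ultimately have "AE x in M. proj_rep_op d tauc f a (S a xi) x * cnj (h x) = 0"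
      proof eventually_elim
        case (elim x)
        then show ?case using hz by (cases "x \<in> D v") (auto simp: proj_rep_op_def)
      qed
      then show ?thesis unfolding L2_inner_def by (rule integral_eq_zero_AE)
    qed
  qed
  obtain F cf where F: "finite F" "F \<subseteq> L"
    and lt: "(\<integral>x. (cmod (h x - (\<Sum>a\<in>F. cf a * proj_rep_op d tauc f a (S a xi) x)))\<^sup>2 \<partial>M)
              < (\<integral>x. (cmod (h x))\<^sup>2 \<partial>M)"
    using bspec[OF dense hL2, rule_format, OF hpos] by (elim exE conjE)
  define u where "u = (\<lambda>x. \<Sum>a\<in>F. cf a * proj_rep_op d tauc f a (S a xi) x)"
  have TSL: "proj_rep_op d tauc f a (S a xi) \<in> L2 M" if "a \<in> F" for a
    using TL2 SL2 xi F that by blast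
  have uL2: "u \<in> L2 M" unfolding u_def
    by (rule L2_sum) (rule L2_cmult[OF TSL])
  have "L2_inner M u h = (\<integral>x. (\<Sum>a\<in>F. cf a * (proj_rep_op d tauc f a (S a xi) x * cnj (h x))) \<partial>M)"
    unfolding L2_inner_def u_def
    by (rule Bochner_Integration.integral_cong) (auto simp: sum_distrib_right mult.assoc)
  also have "\<dots> = (\<Sum>a\<in>F. (\<integral>x. cf a * (proj_rep_op d tauc f a (S a xi) x * cnj (h x)) \<partial>M))"
    by (rule Bochner_Integration.integral_sum) (use TSL hL2 L2_prod_int in \<open>auto intro!: integrable_mult_right\<close>)
  also have "\<dots> = (\<Sum>a\<in>F. cf a * L2_inner M (proj_rep_op d tauc f a (S a xi)) h)"
    by (simp add: L2_inner_def)
  also have "\<dots> = 0" using orth F by (auto intro!: sum.neutral)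
  finally have "L2_inner M u h = 0" .
  from final_ineq[OF hL2 uL2 this] lt show False unfolding u_def by simp
qed

end
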